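(* Let $\nu\in\mathbb{Z}_{\ge0}\cup\{\infty\}$ be a changepoint, $T$ a random sequence length and $\tau$ the detection time of an online changepoint detector; let $\Delta\tau:=\tau-\nu$ and $\Delta T:=T-\nu$. Assume (independent censoring) that conditionally on $\{\nu<\infty,\ \Delta\tau\ge0\}$, $\Delta\tau$ and $\Delta T$ are independent, and that $M_\infty:=\mathbb{E}[\Delta\tau\mid\Delta\tau\ge0,\ \nu<\infty]<\infty$. Let $S^{\mathrm{ADD}}(t):=P(\Delta\tau>t\mid\Delta\tau\ge0,\nu<\infty)$, let $\Delta T^*_{\max}:=\inf\{t\mid P(\Delta T\le t)=1\}$ (assumed finite), and set $$M^{(\mathrm{KM})}_T:=\int_0^{\Delta T^*_{\max}}S^{\mathrm{ADD}}(t)\,dt,\qquad M^{(\mathrm{LB})}_T:=\mathbb{E}[\Delta\tau\mid\nu<\infty,\ 0\le\Delta\tau\le\Delta T],$$ $\mathcal{B}_{\mathrm{TR}}(\hat M^{(\mathrm{KM})}_T):=M^{(\mathrm{KM})}_T-M_\infty$ and $\mathcal{B}_{\mathrm{TR}}(\hat M^{(\mathrm{LB})}_T):=M^{(\mathrm{LB})}_T-M_\infty$. Then $$\mathcal{B}_{\mathrm{TR}}(\hat M^{(\mathrm{LB})}_T)\le\mathcal{B}_{\mathrm{TR}}(\hat M^{(\mathrm{KM})}_T)\le0.$$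
   Context: Setting: a sequence has frames drawn from a pre-change density before the changepoint $\nu$ and a post-change density from $\nu$ on; $\nu$ and $T$ are independent of the observations. $M_\infty$ is the average detection delay (ADD). $M^{(\mathrm{KM})}_T$ is the population version of the KM-ADD estimator with upper limit $b=\Delta T^*_{\max}$, and $M^{(\mathrm{LB})}_T$ the population version of the conventional estimator averaging delays only over sequences whose detection occurs within the sequence. *)

theory Defs
  imports "HOL-Probability.Probability"
begin

text \<open>Changepoint nu (possibly infinite), detection time tau (possibly infinite,
i.e. no detection), sequence length T.  All are random variables on M.\<close>

definition cp_event :: "'a measure \<Rightarrow> ('a \<Rightarrow> bool) \<Rightarrow> 'a set" where
  "cp_event M P = {\<omega> \<in> space M. P \<omega>}"

definition cprob :: "'a measure \<Rightarrow> ('a \<Rightarrow> bool) \<Rightarrow> ('a \<Rightarrow> bool) \<Rightarrow> real" where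
  "cprob M A B = measure M (cp_event M (\<lambda>\<omega>. A \<omega> \<and> B \<omega>)) / measure M (cp_event M A)"

definition dtau :: "('a \<Rightarrow> enat) \<Rightarrow> ('a \<Rightarrow> enat) \<Rightarrow> 'a \<Rightarrow> enat" where
  "dtau nu tau \<omega> = tau \<omega> - nu \<omega>"

text \<open>Delta T = T - nu (integer; meaningful when nu is finite).\<close>
definition dT :: "('a \<Rightarrow> enat) \<Rightarrow> ('a \<Rightarrow> nat) \<Rightarrow> 'a \<Rightarrow> int" where
  "dT nu T \<omega> = int (T \<omega>) - int (the_enat (nu \<omega>))"

definition condA :: "('a \<Rightarrow> enat) \<Rightarrow> ('a \<Rightarrow> enat) \<Rightarrow> 'a \<Rightarrow> bool" where
  "condA nu tau \<omega> \<longleftrightarrow> nu \<omega> \<noteq> \<infinity> \<and> nu \<omega> \<le> tau \<omega>"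

definition ADD_enn :: "'a measure \<Rightarrow> ('a \<Rightarrow> enat) \<Rightarrow> ('a \<Rightarrow> enat) \<Rightarrow> ennreal" where
  "ADD_enn M nu tau =
     (\<integral>\<^sup>+\<omega>. indicator (cp_event M (condA nu tau)) \<omega> * ennreal_of_enat (dtau nu tau \<omega>) \<partial>M)
       / emeasure M (cp_event M (condA nu tau))"

definition M_inf :: "'a measure \<Rightarrow> ('a \<Rightarrow> enat) \<Rightarrow> ('a \<Rightarrow> enat) \<Rightarrow> real" where
  "M_inf M nu tau = enn2real (ADD_enn M nu tau)"

definition S_ADD :: "'a measure \<Rightarrow> ('a \<Rightarrow> enat) \<Rightarrow> ('a \<Rightarrow> enat) \<Rightarrow> real \<Rightarrow> real" where
  "S_ADD M nu tau t = cprob M (condA nu tau)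
      (\<lambda>\<omega>. dtau nu tau \<omega> = \<infinity> \<or> t < real (the_enat (dtau nu tau \<omega>)))"

text \<open>Delta T*_max = inf {t | P(Delta T <= t) = 1}, where Delta T is only defined
  on {nu < infinity}: P(nu < infinity and Delta T > t) = 0.\<close>
definition dT_max :: "'a measure \<Rightarrow> ('a \<Rightarrow> enat) \<Rightarrow> ('a \<Rightarrow> nat) \<Rightarrow> real" where
  "dT_max M nu T = Inf {t::real. prob_space.prob M
      (cp_event M (\<lambda>\<omega>. nu \<omega> \<noteq> \<infinity> \<and> t < real_of_int (dT nu T \<omega>))) = 0}"

definition M_KM :: "'a measure \<Rightarrow> ('a \<Rightarrow> enat) \<Rightarrow> ('a \<Rightarrow> enat) \<Rightarrow> ('a \<Rightarrow> nat) \<Rightarrow> real" where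
  "M_KM M nu tau T = (LINT t:{0..dT_max M nu T}|lborel. S_ADD M nu tau t)"

definition condLB :: "('a \<Rightarrow> enat) \<Rightarrow> ('a \<Rightarrow> enat) \<Rightarrow> ('a \<Rightarrow> nat) \<Rightarrow> 'a \<Rightarrow> bool" where
  "condLB nu tau T \<omega> \<longleftrightarrow> condA nu tau \<omega> \<and> dtau nu tau \<omega> \<noteq> \<infinity> \<and>
      int (the_enat (dtau nu tau \<omega>)) \<le> dT nu T \<omega>"

definition M_LB :: "'a measure \<Rightarrow> ('a \<Rightarrow> enat) \<Rightarrow> ('a \<Rightarrow> enat) \<Rightarrow> ('a \<Rightarrow> nat) \<Rightarrow> real" where
  "M_LB M nu tau T =
     (LINT \<omega>:cp_event M (condLB nu tau T)|M. real (the_enat (dtau nu tau \<omega>)))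
       / measure M (cp_event M (condLB nu tau T))"

definition bias_KM where "bias_KM M nu tau T = M_KM M nu tau T - M_inf M nu tau"
definition bias_LB where "bias_LB M nu tau T = M_LB M nu tau T - M_inf M nu tau"

end

theory Submission
  imports Defs
begin

lemma meas3:
  fixes nu tau :: "'a \<Rightarrow> enat" and T :: "'a \<Rightarrow> nat"
  assumes "nu \<in> measurable M (count_space UNIV)"
    and "tau \<in> measurable M (count_space UNIV)"
    and "T \<in> measurable M (count_space UNIV)"
    and "space N = UNIV"
  shows "(\<lambda>\<omega>. f (nu \<omega>) (tau \<omega>) (T \<omega>)) \<in> measurable M N"
proof -
  have c: "\<And>c. (\<lambda>x. c) \<in> measurable M N" using assms(4) by (simp add: measurable_const)
  have "\<And>i j. (\<lambda>\<omega>. f i j (T \<omega>)) \<in> measurable M N"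
    by (rule measurable_compose_countable[where g=T, OF c assms(3)])
  hence "\<And>i. (\<lambda>\<omega>. f i (tau \<omega>) (T \<omega>)) \<in> measurable M N"
    by (rule measurable_compose_countable[where g=tau, OF _ assms(2)])
  thus ?thesis
    by (rule measurable_compose_countable[where g=nu, OF _ assms(1)])
qed

lemma ev3:
  fixes nu tau :: "'a \<Rightarrow> enat" and T :: "'a \<Rightarrow> nat"
  assumes "nu \<in> measurable M (count_space UNIV)"
    and "tau \<in> measurable M (count_space UNIV)"
    and "T \<in> measurable M (count_space UNIV)"
  shows "{\<omega>\<in>space M. P (nu \<omega>) (tau \<omega>) (T \<omega>)} \<in> sets M"
proof -
  have "(\<lambda>\<omega>. P (nu \<omega>) (tau \<omega>) (T \<omega>)) \<in> measurable M (count_space UNIV)"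
    by (rule meas3[OF assms]) simp
  hence "Measurable.pred M (\<lambda>\<omega>. P (nu \<omega>) (tau \<omega>) (T \<omega>))" by simp
  thus ?thesis by (simp add: pred_def)
qed

lemma layer:
  fixes x :: "'a \<Rightarrow> real"
  assumes "finite_measure M" "E \<in> sets M" "x \<in> borel_measurable M" "\<And>\<omega>. 0 \<le> x \<omega>" "0 \<le> b"
  shows "(\<integral>\<^sup>+t. indicator {0..b} t * emeasure M {\<omega>\<in>E. t < x \<omega>} \<partial>lborel)
       = (\<integral>\<^sup>+\<omega>. indicator E \<omega> * ennreal (min (x \<omega>) b) \<partial>M)"
proof -
  interpret F: finite_measure M by fact
  note [measurable] = assms(2,3)
  have [measurable]: "(\<lambda>\<omega>. indicator {\<omega>. t < x \<omega>} \<omega> :: ennreal) \<in> borel_measurable M" for t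
    unfolding indicator_def by measurable
  interpret P: pair_sigma_finite lborel M
    by (simp add: F.sigma_finite_measure_axioms lborel.sigma_finite_measure_axioms pair_sigma_finite.intro)
  have em: "emeasure M {\<omega>\<in>E. t < x \<omega>} = (\<integral>\<^sup>+\<omega>. indicator E \<omega> * indicator {\<omega>. t < x \<omega>} \<omega> \<partial>M)" for t
  proof -
    have "{\<omega>\<in>E. t < x \<omega>} = E \<inter> {\<omega>\<in>space M. t < x \<omega>}" using sets.sets_into_space[OF assms(2)] by auto
    moreover have "{\<omega>\<in>space M. t < x \<omega>} \<in> sets M" using assms(3) by measurable
    ultimately have s: "{\<omega>\<in>E. t < x \<omega>} \<in> sets M" using assms(2) by auto
    have "emeasure M {\<omega>\<in>E. t < x \<omega>} = (\<integral>\<^sup>+\<omega>. indicator {\<omega>\<in>E. t < x \<omega>} \<omega> \<partial>M)"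
      using s by simp
    also have "\<dots> = (\<integral>\<^sup>+\<omega>. indicator E \<omega> * indicator {\<omega>. t < x \<omega>} \<omega> \<partial>M)"
      by (intro nn_integral_cong) (auto simp: indicator_def)
    finally show ?thesis .
  qed
  have "(\<integral>\<^sup>+t. indicator {0..b} t * emeasure M {\<omega>\<in>E. t < x \<omega>} \<partial>lborel)
      = (\<integral>\<^sup>+t. (\<integral>\<^sup>+\<omega>. indicator {0..b} t * (indicator E \<omega> * indicator {\<omega>. t < x \<omega>} \<omega>) \<partial>M) \<partial>lborel)"
    unfolding em using assms(2,3) by (intro nn_integral_cong) (rule nn_integral_cmult[symmetric], measurable)
  also have "\<dots> = (\<integral>\<^sup>+\<omega>. (\<integral>\<^sup>+t. indicator {0..b} t * (indicator E \<omega> * indicator {\<omega>. t < x \<omega>} \<omega>) \<partial>lborel) \<partial>M)"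
  proof (rule P.Fubini'[symmetric])
    have [measurable]: "(\<lambda>(t, \<omega>). indicator {\<omega>. t < x \<omega>} \<omega> :: ennreal) \<in> borel_measurable (lborel \<Otimes>\<^sub>M M)"
      unfolding indicator_def by measurable
    show "(\<lambda>(t, \<omega>). indicator {0..b} t * (indicator E \<omega> * indicator {\<omega>. t < x \<omega>} \<omega>) :: ennreal) \<in> borel_measurable (lborel \<Otimes>\<^sub>M M)"
      using assms(2,3) by measurable
  qed
  also have "\<dots> = (\<integral>\<^sup>+\<omega>. indicator E \<omega> * ennreal (min (x \<omega>) b) \<partial>M)"
  proof (intro nn_integral_cong)
    fix \<omega>
    have "(\<integral>\<^sup>+t. indicator {0..b} t * (indicator E \<omega> * indicator {\<omega>. t < x \<omega>} \<omega>) \<partial>lborel)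
        = indicator E \<omega> * (\<integral>\<^sup>+t. indicator ({0..b} \<inter> {..<x \<omega>}) t \<partial>lborel)"
      by (subst nn_integral_cmult[symmetric]) (auto intro!: nn_integral_cong simp: indicator_def)
    also have "{0..b} \<inter> {..<x \<omega>} = (if x \<omega> \<le> b then {0..<x \<omega>} else {0..b})" by auto
    also have "(\<integral>\<^sup>+t. indicator (if x \<omega> \<le> b then {0..<x \<omega>} else {0..b}) t \<partial>lborel) = ennreal (min (x \<omega>) b)"
      using assms(4)[of \<omega>] assms(5) by (auto simp: min_def)
    finally show "(\<integral>\<^sup>+t. indicator {0..b} t * (indicator E \<omega> * indicator {\<omega>. t < x \<omega>} \<omega>) \<partial>lborel) = indicator E \<omega> * ennreal (min (x \<omega>) b)" .
  qed
  finally show ?thesis .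
qed


theorem theorem4p4:
  fixes M :: "'a measure" and nu tau :: "'a \<Rightarrow> enat" and T :: "'a \<Rightarrow> nat"
  assumes "prob_space M"
    and "nu \<in> measurable M (count_space UNIV)"
    and "tau \<in> measurable M (count_space UNIV)"
    and "T \<in> measurable M (count_space UNIV)"
    and "measure M (cp_event M (condA nu tau)) > 0"
    and indep: "\<And>X Y. cprob M (condA nu tau) (\<lambda>\<omega>. dtau nu tau \<omega> \<in> X \<and> dT nu T \<omega> \<in> Y)
                 = cprob M (condA nu tau) (\<lambda>\<omega>. dtau nu tau \<omega> \<in> X)
                   * cprob M (condA nu tau) (\<lambda>\<omega>. dT nu T \<omega> \<in> Y)"
    and "ADD_enn M nu tau < \<infinity>"
    and "\<exists>t::real. prob_space.prob M
           (cp_event M (\<lambda>\<omega>. nu \<omega> \<noteq> \<infinity> \<and> t < real_of_int (dT nu T \<omega>))) = 0"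
  shows "bias_LB M nu tau T \<le> bias_KM M nu tau T \<and> bias_KM M nu tau T \<le> 0"
proof -
  interpret prob_space M by fact
  note ms = assms(2-4)
  define A where "A = cp_event M (condA nu tau)"
  define N where "N = cp_event M (\<lambda>\<omega>. condA nu tau \<omega> \<and> dtau nu tau \<omega> = \<infinity>)"
  define A' where "A' = cp_event M (\<lambda>\<omega>. condA nu tau \<omega> \<and> dtau nu tau \<omega> \<noteq> \<infinity>)"
  define L where "L = cp_event M (condLB nu tau T)"
  define x where "x = (\<lambda>\<omega>. real (the_enat (dtau nu tau \<omega>)))"
  define d where "d = (\<lambda>\<omega>. real_of_int (dT nu T \<omega>))"
  define b where "b = dT_max M nu T"
  define XT where "XT = (\<lambda>t. cp_event M (\<lambda>\<omega>. condA nu tau \<omega> \<and> (dtau nu tau \<omega> = \<infinity> \<or> t < x \<omega>)))"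
  define \<mu> where "\<mu> = measure M A"
  have mu_pos: "0 < \<mu>" using assms(5) unfolding \<mu>_def A_def .
  have evs: "{\<omega>\<in>space M. P (nu \<omega>) (tau \<omega>) (T \<omega>)} \<in> sets M" for P
    by (rule ev3[OF ms])
  have A_sets[measurable]: "A \<in> sets M"
    unfolding A_def cp_event_def condA_def using evs[of "\<lambda>a b c. a \<noteq> \<infinity> \<and> a \<le> b"] by simp
  have N_sets[measurable]: "N \<in> sets M"
    unfolding N_def cp_event_def condA_def dtau_def using evs[of "\<lambda>a b c. (a \<noteq> \<infinity> \<and> a \<le> b) \<and> b - a = \<infinity>"] by simp
  have A'_sets[measurable]: "A' \<in> sets M"
    unfolding A'_def cp_event_def condA_def dtau_def using evs[of "\<lambda>a b c. (a \<noteq> \<infinity> \<and> a \<le> b) \<and> b - a \<noteq> \<infinity>"] by simp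
  have L_sets[measurable]: "L \<in> sets M"
    unfolding L_def cp_event_def condLB_def condA_def dtau_def dT_def
    using evs[of "\<lambda>a b c. ((a \<noteq> \<infinity> \<and> a \<le> b) \<and> b - a \<noteq> \<infinity> \<and> int (the_enat (b - a)) \<le> int c - int (the_enat a))"] by simp
  have x_meas[measurable]: "x \<in> borel_measurable M"
    unfolding x_def dtau_def by (rule meas3[OF ms, of _ "\<lambda>a b c. real (the_enat (b - a))"]) simp
  have x_nn: "\<And>\<omega>. 0 \<le> x \<omega>" unfolding x_def by simp
  have eA: "emeasure M A = ennreal \<mu>" unfolding \<mu>_def by (simp add: emeasure_eq_measure)
  have N_null: "emeasure M N = 0"
  proof (rule ccontr)
    assume nz: "emeasure M N \<noteq> 0"
    have "(\<integral>\<^sup>+\<omega>. \<infinity> * indicator N \<omega> \<partial>M) \<le> (\<integral>\<^sup>+\<omega>. indicator A \<omega> * ennreal_of_enat (dtau nu tau \<omega>) \<partial>M)"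
      by (intro nn_integral_mono) (auto simp: indicator_def N_def A_def cp_event_def)
    moreover have "(\<integral>\<^sup>+\<omega>. \<infinity> * indicator N \<omega> \<partial>M) = \<infinity>"
      using nz N_sets by (subst nn_integral_cmult_indicator) (simp_all add: ennreal_top_mult)
    ultimately have "(\<integral>\<^sup>+\<omega>. indicator A \<omega> * ennreal_of_enat (dtau nu tau \<omega>) \<partial>M) = \<infinity>"
      by (simp add: top_unique)
    hence "ADD_enn M nu tau = \<infinity>" unfolding ADD_enn_def A_def[symmetric] eA
      by (simp add: ennreal_top_divide)
    thus False using assms(7) by simp
  qed
  have N_nulls: "N \<in> null_sets M" using N_null N_sets by (simp add: null_sets_def)
  have IA_eq: "ADD_enn M nu tau = (\<integral>\<^sup>+\<omega>. indicator A' \<omega> * ennreal (x \<omega>) \<partial>M) / emeasure M A"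
  proof -
    have "(\<integral>\<^sup>+\<omega>. indicator A \<omega> * ennreal_of_enat (dtau nu tau \<omega>) \<partial>M) = (\<integral>\<^sup>+\<omega>. indicator A' \<omega> * ennreal (x \<omega>) \<partial>M)"
    proof (rule nn_integral_cong_AE)
      show "AE \<omega> in M. indicator A \<omega> * ennreal_of_enat (dtau nu tau \<omega>) = indicator A' \<omega> * ennreal (x \<omega>)"
        using AE_not_in[OF N_nulls]
      proof eventually_elim
        case (elim \<omega>)
        thus ?case
          by (cases "dtau nu tau \<omega>") (auto simp: indicator_def A_def A'_def N_def cp_event_def x_def ennreal_of_nat_eq_real_of_nat)
      qed
    qed
    thus ?thesis unfolding ADD_enn_def A_def by simp
  qed
  define IA where "IA = enn2real (\<integral>\<^sup>+\<omega>. indicator A' \<omega> * ennreal (x \<omega>) \<partial>M)"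
  have IA_fin: "(\<integral>\<^sup>+\<omega>. indicator A' \<omega> * ennreal (x \<omega>) \<partial>M) = ennreal IA"
  proof -
    have "(\<integral>\<^sup>+\<omega>. indicator A' \<omega> * ennreal (x \<omega>) \<partial>M) \<noteq> \<infinity>"
    proof
      assume "(\<integral>\<^sup>+\<omega>. indicator A' \<omega> * ennreal (x \<omega>) \<partial>M) = \<infinity>"
      hence "ADD_enn M nu tau = \<infinity>" unfolding IA_eq eA by (simp add: ennreal_top_divide)
      thus False using assms(7) by simp
    qed
    thus ?thesis unfolding IA_def by (simp add: less_top)
  qed
  have Minf: "M_inf M nu tau = IA / \<mu>"
    unfolding M_inf_def IA_eq IA_fin eA using mu_pos by (simp add: divide_ennreal IA_def)
  have IA_nn: "0 \<le> IA" unfolding IA_def by simp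
  define Ev where "Ev = (\<lambda>t. cp_event M (\<lambda>\<omega>. nu \<omega> \<noteq> \<infinity> \<and> t < d \<omega>))"
  have Ev_sets[measurable]: "Ev t \<in> sets M" for t
    unfolding Ev_def cp_event_def d_def dT_def
    using evs[of "\<lambda>a b c. a \<noteq> \<infinity> \<and> t < real_of_int (int c - int (the_enat a))"] by simp
  have Ev_mono: "s \<le> t \<Longrightarrow> Ev t \<subseteq> Ev s" for s t unfolding Ev_def cp_event_def by auto
  define Z where "Z = {t. measure M (Ev t) = 0}"
  have Z_ne: "Z \<noteq> {}" using assms(8) unfolding Z_def Ev_def d_def by auto
  have Fin_sets: "cp_event M (\<lambda>\<omega>. nu \<omega> \<noteq> \<infinity>) \<in> sets M"
    unfolding cp_event_def using evs[of "\<lambda>a b c. a \<noteq> \<infinity>"] by simp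
  have "\<exists>n::nat. measure M (Ev (- real n)) \<noteq> 0"
  proof (rule ccontr)
    assume "\<not> ?thesis"
    hence "\<And>n::nat. Ev (- real n) \<in> null_sets M" by (simp add: null_sets_def emeasure_eq_measure)
    hence "(\<Union>n. Ev (- real n)) \<in> null_sets M" by blast
    moreover have "(\<Union>n. Ev (- real n)) = cp_event M (\<lambda>\<omega>. nu \<omega> \<noteq> \<infinity>)"
    proof (auto simp: Ev_def cp_event_def)
      fix \<omega> assume "\<omega> \<in> space M"
      obtain n :: nat where "- d \<omega> < real n" using reals_Archimedean2 by blast
      thus "\<exists>n. - real n < d \<omega>" by (intro exI[of _ n]) simp
    qed
    ultimately have "measure M (cp_event M (\<lambda>\<omega>. nu \<omega> \<noteq> \<infinity>)) = 0" by (simp add: measure_eq_0_null_sets)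
    moreover have "measure M A \<le> measure M (cp_event M (\<lambda>\<omega>. nu \<omega> \<noteq> \<infinity>))"
      by (rule finite_measure_mono[OF _ Fin_sets]) (auto simp: A_def cp_event_def condA_def)
    ultimately show False using mu_pos \<mu>_def by simp
  qed
  then obtain n0 :: nat where n0: "measure M (Ev (- real n0)) \<noteq> 0" by blast
  have Z_bdd: "bdd_below Z"
  proof (rule bdd_belowI)
    fix t assume "t \<in> Z"
    show "- real n0 \<le> t"
    proof (rule ccontr)
      assume "\<not> - real n0 \<le> t"
      hence "measure M (Ev (- real n0)) \<le> measure M (Ev t)"
        by (intro finite_measure_mono Ev_mono Ev_sets) simp
      thus False using \<open>t \<in> Z\<close> n0 unfolding Z_def by (simp add: measure_nonneg antisym)
    qed
  qed
  have b_null: "Ev b \<in> null_sets M"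
  proof -
    have "Ev (b + 1 / Suc n) \<in> null_sets M" for n :: nat
    proof -
      have "Inf Z < b + 1 / Suc n" unfolding b_def dT_max_def Z_def Ev_def d_def by simp
      then obtain z where z: "z \<in> Z" "z < b + 1 / Suc n" using cInf_lessD[OF Z_ne] by blast
      have "Ev z \<in> null_sets M" using z(1) unfolding Z_def by (simp add: null_sets_def emeasure_eq_measure)
      moreover have "Ev (b + 1 / Suc n) \<subseteq> Ev z" using Ev_mono[of z "b + 1 / Suc n"] z(2) by simp
      ultimately show ?thesis by (rule null_sets_subset[OF _ Ev_sets])
    qed
    hence "(\<Union>n. Ev (b + 1 / Suc n)) \<in> null_sets M" by blast
    moreover have "Ev b \<subseteq> (\<Union>n. Ev (b + 1 / Suc n))"
    proof
      fix \<omega> assume "\<omega> \<in> Ev b"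
      hence w: "\<omega> \<in> space M" "nu \<omega> \<noteq> \<infinity>" "b < d \<omega>" unfolding Ev_def cp_event_def by auto
      obtain n :: nat where "1 / (d \<omega> - b) < real n" using reals_Archimedean2 by blast
      moreover have p: "0 < d \<omega> - b" using w(3) by simp
      ultimately have "1 < real n * (d \<omega> - b)" by (simp add: divide_less_eq)
      hence "1 < real (Suc n) * (d \<omega> - b)" using p by (simp add: algebra_simps)
      hence "1 / real (Suc n) < d \<omega> - b" by (simp add: divide_less_eq mult.commute)
      hence "\<omega> \<in> Ev (b + 1 / Suc n)" using w unfolding Ev_def cp_event_def by simp
      thus "\<omega> \<in> (\<Union>n. Ev (b + 1 / Suc n))" by blast
    qed
    ultimately show ?thesis by (intro null_sets_subset[OF _ Ev_sets])
  qed
  have evQ: "cp_event M (\<lambda>\<omega>. Q (condA nu tau \<omega>) (dtau nu tau \<omega>) (dT nu T \<omega>)) \<in> sets M" for Q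
    unfolding cp_event_def condA_def dtau_def dT_def
    by (rule evs)
  have LA': "L \<subseteq> A'" unfolding L_def A'_def cp_event_def condLB_def by auto
  have Lxd: "\<And>\<omega>. \<omega> \<in> L \<Longrightarrow> x \<omega> \<le> d \<omega> \<and> nu \<omega> \<noteq> \<infinity> \<and> \<omega> \<in> space M"
    unfolding L_def cp_event_def condLB_def condA_def x_def d_def by auto
  have Lsub: "{\<omega>\<in>L. b < x \<omega>} \<subseteq> Ev b"
  proof
    fix \<omega> assume "\<omega> \<in> {\<omega>\<in>L. b < x \<omega>}"
    hence "\<omega> \<in> L" "b < x \<omega>" by auto
    with Lxd[OF this(1)] show "\<omega> \<in> Ev b" unfolding Ev_def cp_event_def by simp
  qed
  define LB where "LB = (LINT \<omega>:L|M. x \<omega>)"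
  have MLB: "M_LB M nu tau T = LB / measure M L"
    unfolding M_LB_def LB_def L_def x_def ..
  have LB_eq': "LB = enn2real (\<integral>\<^sup>+\<omega>. indicator L \<omega> * ennreal (x \<omega>) \<partial>M)"
  proof -
    have "LB = enn2real (\<integral>\<^sup>+\<omega>. ennreal (indicator L \<omega> *\<^sub>R x \<omega>) \<partial>M)"
      unfolding LB_def set_lebesgue_integral_def
      by (rule integral_eq_nn_integral) (auto simp: x_nn)
    also have "(\<integral>\<^sup>+\<omega>. ennreal (indicator L \<omega> *\<^sub>R x \<omega>) \<partial>M) = (\<integral>\<^sup>+\<omega>. indicator L \<omega> * ennreal (x \<omega>) \<partial>M)"
      by (intro nn_integral_cong) (simp add: indicator_def)
    finally show ?thesis .
  qed
  have LB_fin: "(\<integral>\<^sup>+\<omega>. indicator L \<omega> * ennreal (x \<omega>) \<partial>M) \<le> ennreal IA"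
    unfolding IA_fin[symmetric] using LA' by (intro nn_integral_mono) (auto simp: indicator_def)
  have LB_eq: "ennreal LB = (\<integral>\<^sup>+\<omega>. indicator L \<omega> * ennreal (x \<omega>) \<partial>M)"
    unfolding LB_eq' using le_less_trans[OF LB_fin ennreal_less_top] by (rule ennreal_enn2real)
  have LB_nn: "0 \<le> LB" unfolding LB_eq' by simp
  have S_eq: "S_ADD M nu tau t = measure M (XT t) / \<mu>" for t
    unfolding S_ADD_def cprob_def XT_def x_def \<mu>_def A_def ..
  have XT_sets[measurable]: "XT t \<in> sets M" for t
    using evQ[of "\<lambda>c e y. c \<and> (e = \<infinity> \<or> t < real (the_enat e))"] unfolding XT_def x_def by simp
  have XA_sets[measurable]: "{\<omega>\<in>A'. t < x \<omega>} \<in> sets M" for t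
  proof -
    have "{\<omega>\<in>A'. t < x \<omega>} = cp_event M (\<lambda>\<omega>. condA nu tau \<omega> \<and> (dtau nu tau \<omega> \<noteq> \<infinity> \<and> t < real (the_enat (dtau nu tau \<omega>))))"
      unfolding A'_def cp_event_def x_def by auto
    thus ?thesis using evQ[of "\<lambda>c e y. c \<and> (e \<noteq> \<infinity> \<and> t < real (the_enat e))"] by simp
  qed
  have XT_eq: "emeasure M (XT t) = emeasure M {\<omega>\<in>A'. t < x \<omega>}" for t
  proof -
    have "XT t \<union> N = {\<omega>\<in>A'. t < x \<omega>} \<union> N"
      unfolding XT_def N_def A'_def cp_event_def by auto
    hence "emeasure M (XT t \<union> N) = emeasure M ({\<omega>\<in>A'. t < x \<omega>} \<union> N)" by simp
    thus ?thesis using emeasure_Un_null_set[OF XT_sets N_nulls] emeasure_Un_null_set[OF XA_sets N_nulls] by simp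
  qed
  have XT_le: "measure M (XT t) \<le> \<mu>" for t
    unfolding \<mu>_def by (rule finite_measure_mono[OF _ A_sets]) (auto simp: XT_def A_def cp_event_def)
  have core: "measure M {\<omega>\<in>L. t < x \<omega>} * \<mu> \<le> measure M (XT t) * measure M L" for t
  proof -
    define X1 :: "enat set" where "X1 = {e. e = \<infinity> \<or> t < real (the_enat e)}"
    define Y1 :: "int set" where "Y1 = {y. t < real_of_int y}"
    define g where "g = measure M (cp_event M (\<lambda>\<omega>. condA nu tau \<omega> \<and> dT nu T \<omega> \<in> Y1))"
    define s' where "s' = measure M (XT t)"
    define C2 where "C2 = cp_event M (\<lambda>\<omega>. condA nu tau \<omega> \<and> dtau nu tau \<omega> \<in> - X1)"
    define j1 where "j1 = measure M (cp_event M (\<lambda>\<omega>. condA nu tau \<omega> \<and> (dtau nu tau \<omega> \<in> X1 \<and> dT nu T \<omega> \<in> Y1)))"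
    define j2 where "j2 = measure M (cp_event M (\<lambda>\<omega>. condA nu tau \<omega> \<and> (dtau nu tau \<omega> \<in> - X1 \<and> dT nu T \<omega> \<in> Y1)))"
    define a where "a = measure M {\<omega>\<in>L. t < x \<omega>}"
    define c where "c = measure M {\<omega>\<in>L. \<not> t < x \<omega>}"
    have XT1: "cp_event M (\<lambda>\<omega>. condA nu tau \<omega> \<and> dtau nu tau \<omega> \<in> X1) = XT t"
      unfolding XT_def X1_def x_def by simp
    have C2_sets: "C2 \<in> sets M" unfolding C2_def using evQ[of "\<lambda>c e y. c \<and> e \<in> - X1"] by simp
    have "measure M (XT t \<union> C2) = s' + measure M C2" unfolding s'_def
      by (rule finite_measure_Union[OF XT_sets C2_sets]) (auto simp: XT_def C2_def X1_def x_def cp_event_def)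
    moreover have "XT t \<union> C2 = A" unfolding XT_def C2_def X1_def x_def A_def cp_event_def by auto
    ultimately have mC2: "measure M C2 = \<mu> - s'" unfolding \<mu>_def by simp
    have i1: "j1 / \<mu> = (s' / \<mu>) * (g / \<mu>)"
      using indep[of X1 Y1] unfolding cprob_def XT1 j1_def s'_def g_def \<mu>_def A_def .
    have i2: "j2 / \<mu> = ((\<mu> - s') / \<mu>) * (g / \<mu>)"
      using indep[of "- X1" Y1] unfolding cprob_def C2_def[symmetric] mC2 j2_def g_def \<mu>_def A_def .
    have j1e: "j1 = s' * g / \<mu>" using i1 mu_pos by (simp add: field_simps)
    have j2e: "j2 = (\<mu> - s') * g / \<mu>" using i2 mu_pos by (simp add: field_simps)
    have aL_sets: "{\<omega>\<in>L. t < x \<omega>} \<in> sets M"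
    proof -
      have "{\<omega>\<in>L. t < x \<omega>} = L \<inter> {\<omega>\<in>space M. t < x \<omega>}" using Lxd by auto
      thus ?thesis by simp
    qed
    have cL_sets: "{\<omega>\<in>L. \<not> t < x \<omega>} \<in> sets M"
    proof -
      have "{\<omega>\<in>L. \<not> t < x \<omega>} = L \<inter> {\<omega>\<in>space M. \<not> t < x \<omega>}" using Lxd by auto
      thus ?thesis by simp
    qed
    have "a \<le> j1" unfolding a_def j1_def
    proof (rule finite_measure_mono)
      show "cp_event M (\<lambda>\<omega>. condA nu tau \<omega> \<and> (dtau nu tau \<omega> \<in> X1 \<and> dT nu T \<omega> \<in> Y1)) \<in> sets M"
        using evQ[of "\<lambda>c e y. c \<and> (e \<in> X1 \<and> y \<in> Y1)"] by simp
      show "{\<omega>\<in>L. t < x \<omega>} \<subseteq> cp_event M (\<lambda>\<omega>. condA nu tau \<omega> \<and> (dtau nu tau \<omega> \<in> X1 \<and> dT nu T \<omega> \<in> Y1))"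
      proof
        fix \<omega> assume "\<omega> \<in> {\<omega>\<in>L. t < x \<omega>}"
        hence w: "\<omega> \<in> L" "t < x \<omega>" by auto
        have "x \<omega> \<le> d \<omega>" using Lxd[OF w(1)] by simp
        thus "\<omega> \<in> cp_event M (\<lambda>\<omega>. condA nu tau \<omega> \<and> (dtau nu tau \<omega> \<in> X1 \<and> dT nu T \<omega> \<in> Y1))"
          using w unfolding L_def cp_event_def condLB_def X1_def Y1_def x_def d_def by auto
      qed
    qed
    moreover have "j2 \<le> c" unfolding c_def j2_def
    proof (rule finite_measure_mono[OF _ cL_sets])
      show "cp_event M (\<lambda>\<omega>. condA nu tau \<omega> \<and> (dtau nu tau \<omega> \<in> - X1 \<and> dT nu T \<omega> \<in> Y1)) \<subseteq> {\<omega>\<in>L. \<not> t < x \<omega>}"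
      proof
        fix \<omega> assume "\<omega> \<in> cp_event M (\<lambda>\<omega>. condA nu tau \<omega> \<and> (dtau nu tau \<omega> \<in> - X1 \<and> dT nu T \<omega> \<in> Y1))"
        hence w: "\<omega> \<in> space M" "condA nu tau \<omega>" "dtau nu tau \<omega> \<noteq> \<infinity>" "\<not> t < x \<omega>" "t < d \<omega>"
          unfolding cp_event_def X1_def Y1_def x_def d_def by auto
        hence "x \<omega> \<le> d \<omega>" by simp
        hence "int (the_enat (dtau nu tau \<omega>)) \<le> dT nu T \<omega>" unfolding x_def d_def by linarith
        thus "\<omega> \<in> {\<omega>\<in>L. \<not> t < x \<omega>}" using w unfolding L_def cp_event_def condLB_def by auto
      qed
    qed
    moreover have "measure M L = a + c" unfolding a_def c_def
    proof -
      have "L = {\<omega>\<in>L. t < x \<omega>} \<union> {\<omega>\<in>L. \<not> t < x \<omega>}" by auto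
      hence "measure M L = measure M ({\<omega>\<in>L. t < x \<omega>} \<union> {\<omega>\<in>L. \<not> t < x \<omega>})" by simp
      also have "\<dots> = measure M {\<omega>\<in>L. t < x \<omega>} + measure M {\<omega>\<in>L. \<not> t < x \<omega>}"
        by (rule finite_measure_Union[OF aL_sets cL_sets]) auto
      finally show "measure M L = measure M {\<omega>\<in>L. t < x \<omega>} + measure M {\<omega>\<in>L. \<not> t < x \<omega>}" .
    qed
    moreover have "0 \<le> s'" "s' \<le> \<mu>" unfolding s'_def using XT_le by simp_all
    moreover have "0 \<le> a" unfolding a_def by simp
    ultimately show ?thesis unfolding a_def[symmetric] s'_def[symmetric]
    proof -
      assume h: "a \<le> j1" "j2 \<le> c" "measure M L = a + c" "0 \<le> s'" "s' \<le> \<mu>" "0 \<le> a"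
      have "a * (\<mu> - s') \<le> j1 * (\<mu> - s')" using h by (intro mult_right_mono) simp_all
      also have "j1 * (\<mu> - s') = s' * j2" unfolding j1e j2e by (simp add: field_simps)
      also have "s' * j2 \<le> s' * c" using h by (intro mult_left_mono) simp_all
      finally have "a * (\<mu> - s') \<le> s' * c" .
      thus "a * \<mu> \<le> s' * measure M L" unfolding h(3) by (simp add: algebra_simps)
    qed
  qed
  show ?thesis
  proof (cases "b < 0")
    case True
    have KM0: "M_KM M nu tau T = 0" unfolding M_KM_def b_def[symmetric] using True by (simp add: set_lebesgue_integral_def)
    have "L \<subseteq> Ev b"
    proof
      fix \<omega> assume "\<omega> \<in> L"
      with Lxd[OF this] True x_nn[of \<omega>] show "\<omega> \<in> Ev b" unfolding Ev_def cp_event_def by simp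
    qed
    hence "L \<in> null_sets M" using b_null null_sets_subset[OF _ L_sets] by blast
    hence "measure M L = 0" by (simp add: measure_eq_0_null_sets)
    hence "M_LB M nu tau T = 0" unfolding MLB by simp
    thus ?thesis unfolding bias_LB_def bias_KM_def KM0 Minf using IA_nn mu_pos by simp
  next
    case False
    hence b0: "0 \<le> b" by simp
    have FM: "finite_measure M" by (rule finite_measure_axioms)
    define K where "K = (\<integral>\<^sup>+\<omega>. indicator A' \<omega> * ennreal (min (x \<omega>) b) \<partial>M)"
    have layerA: "(\<integral>\<^sup>+t. indicator {0..b} t * emeasure M {\<omega>\<in>A'. t < x \<omega>} \<partial>lborel) = K"
      unfolding K_def by (rule layer[OF FM A'_sets x_meas x_nn b0])
    have K_le: "K \<le> ennreal IA" unfolding K_def IA_fin[symmetric]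
    proof (intro nn_integral_mono)
      fix \<omega>
      have "ennreal (min (x \<omega>) b) \<le> ennreal (x \<omega>)" by (rule ennreal_leI) simp
      thus "indicator A' \<omega> * ennreal (min (x \<omega>) b) \<le> indicator A' \<omega> * ennreal (x \<omega>)"
        by (simp add: indicator_def)
    qed
    define Kr where "Kr = enn2real K"
    have K_eq: "K = ennreal Kr" unfolding Kr_def
      using le_less_trans[OF K_le ennreal_less_top] by (simp)
    have Kr_le: "Kr \<le> IA" using K_le IA_nn unfolding K_eq by simp
    have Kr_nn: "0 \<le> Kr" unfolding Kr_def by simp
    have XT_mono: "s \<le> t \<Longrightarrow> measure M (XT t) \<le> measure M (XT s)" for s t
      by (rule finite_measure_mono[OF _ XT_sets]) (auto simp: XT_def cp_event_def)
    have S_meas: "S_ADD M nu tau \<in> borel_measurable borel"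
    proof -
      have "(\<lambda>t. - S_ADD M nu tau t) \<in> borel_measurable borel"
        by (rule borel_measurable_mono) (auto simp: mono_def S_eq intro!: divide_right_mono XT_mono less_imp_le[OF mu_pos])
      hence "(\<lambda>t. - (- S_ADD M nu tau t)) \<in> borel_measurable borel" by measurable
      thus ?thesis by simp
    qed
    have KM_eq: "M_KM M nu tau T = Kr / \<mu>"
    proof -
      have "M_KM M nu tau T = enn2real (\<integral>\<^sup>+t. ennreal (indicator {0..b} t *\<^sub>R S_ADD M nu tau t) \<partial>lborel)"
        unfolding M_KM_def b_def[symmetric] set_lebesgue_integral_def
      proof (rule integral_eq_nn_integral)
        note [measurable] = S_meas
        show "(\<lambda>t. indicator {0..b} t *\<^sub>R S_ADD M nu tau t) \<in> borel_measurable lborel" by simp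
        show "AE t in lborel. 0 \<le> indicator {0..b} t *\<^sub>R S_ADD M nu tau t"
          by (auto simp: S_eq mu_pos less_imp_le)
      qed
      also have "(\<integral>\<^sup>+t. ennreal (indicator {0..b} t *\<^sub>R S_ADD M nu tau t) \<partial>lborel)
          = (\<integral>\<^sup>+t. ennreal (1 / \<mu>) * (indicator {0..b} t * emeasure M {\<omega>\<in>A'. t < x \<omega>}) \<partial>lborel)"
      proof (intro nn_integral_cong)
        fix t
        have "emeasure M {\<omega>\<in>A'. t < x \<omega>} = ennreal (measure M (XT t))"
          unfolding XT_eq[symmetric] by (simp add: emeasure_eq_measure)
        thus "ennreal (indicator {0..b} t *\<^sub>R S_ADD M nu tau t) = ennreal (1 / \<mu>) * (indicator {0..b} t * emeasure M {\<omega>\<in>A'. t < x \<omega>})"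
          using mu_pos by (auto simp: S_eq indicator_def ennreal_mult[symmetric])
      qed
      also have "\<dots> = ennreal (1 / \<mu>) * K" unfolding layerA[symmetric]
        by (rule nn_integral_cmult) simp
      also have "\<dots> = ennreal (Kr / \<mu>)" unfolding K_eq using mu_pos Kr_nn
        by (simp add: ennreal_mult[symmetric])
      finally show ?thesis using mu_pos Kr_nn by simp
    qed
    define mL where "mL = measure M L"
    have LB_le: "LB \<le> mL / \<mu> * Kr"
    proof -
      have "ennreal LB = (\<integral>\<^sup>+\<omega>. indicator L \<omega> * ennreal (min (x \<omega>) b) \<partial>M)"
        unfolding LB_eq
      proof (rule nn_integral_cong_AE)
        show "AE \<omega> in M. indicator L \<omega> * ennreal (x \<omega>) = indicator L \<omega> * ennreal (min (x \<omega>) b)"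
          using AE_not_in[OF b_null]
        proof eventually_elim
          case (elim \<omega>)
          thus ?case using Lsub by (auto simp: indicator_def min_def)
        qed
      qed
      also have "\<dots> = (\<integral>\<^sup>+t. indicator {0..b} t * emeasure M {\<omega>\<in>L. t < x \<omega>} \<partial>lborel)"
        by (rule layer[OF FM L_sets x_meas x_nn b0, symmetric])
      also have "\<dots> \<le> (\<integral>\<^sup>+t. ennreal (mL / \<mu>) * (indicator {0..b} t * emeasure M {\<omega>\<in>A'. t < x \<omega>}) \<partial>lborel)"
      proof (intro nn_integral_mono)
        fix t
        have "measure M {\<omega>\<in>L. t < x \<omega>} \<le> mL / \<mu> * measure M (XT t)"
          using core[of t] mu_pos unfolding mL_def by (simp add: field_simps)
        moreover have "emeasure M {\<omega>\<in>A'. t < x \<omega>} = ennreal (measure M (XT t))"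
          unfolding XT_eq[symmetric] by (simp add: emeasure_eq_measure)
        moreover have "emeasure M {\<omega>\<in>L. t < x \<omega>} = ennreal (measure M {\<omega>\<in>L. t < x \<omega>})"
          by (simp add: emeasure_eq_measure)
        ultimately show "indicator {0..b} t * emeasure M {\<omega>\<in>L. t < x \<omega>} \<le> ennreal (mL / \<mu>) * (indicator {0..b} t * emeasure M {\<omega>\<in>A'. t < x \<omega>})"
          by (auto simp: indicator_def ennreal_mult[symmetric] mL_def mu_pos less_imp_le)
      qed
      also have "\<dots> = ennreal (mL / \<mu>) * K" unfolding layerA[symmetric]
        by (rule nn_integral_cmult) simp
      also have "\<dots> = ennreal (mL / \<mu> * Kr)" unfolding K_eq using mu_pos Kr_nn
        by (simp add: ennreal_mult[symmetric] mL_def)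
      finally show ?thesis using mu_pos Kr_nn by (simp add: ennreal_le_iff mL_def)
    qed
    have LB_KM: "M_LB M nu tau T \<le> Kr / \<mu>"
    proof (cases "mL = 0")
      case True
      thus ?thesis unfolding MLB mL_def[symmetric] using Kr_nn mu_pos by simp
    next
      case False
      hence "0 < mL" unfolding mL_def by (simp add: less_le)
      hence "LB / mL \<le> Kr / \<mu>" using LB_le mu_pos by (simp add: field_simps)
      thus ?thesis unfolding MLB mL_def[symmetric] .
    qed
    have "Kr / \<mu> \<le> IA / \<mu>" using Kr_le mu_pos by (simp add: divide_right_mono)
    thus ?thesis unfolding bias_LB_def bias_KM_def KM_eq Minf using LB_KM by simp
  qed
qed

end
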